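(* If the root system $\Phi$ is of type $A_n$, the closures of the regions of the hyperplane arrangement $\mathcal H_\Phi$ coincide with the cones on the facets of the root polytope $\mathcal P_\Phi$.
   Context: $\Phi$ is an irreducible root system of rank $n$ in the Euclidean space $E=\operatorname{span}_{\mathbb R}\Phi$; $\mathcal P_\Phi=\operatorname{conv}(\Phi)$. $\mathcal H_\Phi$ is the central hyperplane arrangement in $E$ consisting of the linear hyperplanes $\operatorname{span}_{\mathbb R}F$ for all faces $F$ of $\mathcal P_\Phi$ of codimension 2 (i.e. of dimension $n-2$). A region of $\mathcal H_\Phi$ is a connected component of $E\setminus\bigcup_{H\in\mathcal H_\Phi}H$. The cone on a facet $F$ is $\{tx\mid t\ge0,\ x\in F\}$. *)

theory Defs
  imports "HOL-Analysis.Analysis"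
begin

definition root_polytope :: "'a::euclidean_space set \<Rightarrow> 'a set" where
  "root_polytope Phi = convex hull Phi"

definition root_arrangement :: "'a::euclidean_space set \<Rightarrow> 'a set set" where
  "root_arrangement Phi =
     {span F | F. F face_of root_polytope Phi \<and> aff_dim F = aff_dim (root_polytope Phi) - 2}"

definition arrangement_regions :: "'a::euclidean_space set \<Rightarrow> 'a set set" where
  "arrangement_regions Phi = components (span Phi - \<Union>(root_arrangement Phi))"

definition cone_on :: "'a::real_vector set \<Rightarrow> 'a set" where
  "cone_on F = {t *\<^sub>R x | t x. t \<ge> 0 \<and> x \<in> F}"

text \<open>The root system of type \<open>A_n\<close>, realised in the standard way:
  \<open>{e_i - e_j | i \<noteq> j}\<close> in \<open>\<real>^(n+1)\<close>, where the index type \<open>'n\<close> has \<open>n+1\<close> elements.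
  It spans the hyperplane of vectors with coordinate sum zero.\<close>
definition root_system_A :: "(real^'n) set" where
  "root_system_A = {axis i 1 - axis j 1 | i j. i \<noteq> j}"

end

theory Submission
  imports Defs
begin


definition sE :: "(real^'n) set" where "sE = {x. (\<Sum>i\<in>UNIV. x$i) = 0}"
definition ind :: "'n set \<Rightarrow> real^'n" where "ind S = (\<chi> i. if i \<in> S then 1 else 0)"
abbreviation PA :: "(real^'n) set" where "PA \<equiv> root_polytope root_system_A"

lemma ind_inner: "ind S \<bullet> x = (\<Sum>i\<in>S. x$i)"
proof -
  have "ind S \<bullet> x = (\<Sum>i\<in>UNIV. if i \<in> S then x$i else 0)"
    unfolding inner_vec_def ind_def by (rule sum.cong) auto
  also have "\<dots> = (\<Sum>i\<in>S. x$i)" by (simp add: sum.inter_restrict[symmetric])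
  finally show ?thesis .
qed

lemma axis_comp: "(axis i (1::real) - axis j 1) $ k = (if k = i then 1 else 0) - (if k = j then 1 else 0)"
  by (simp add: axis_def)

lemma sum_axis: "(\<Sum>i\<in>A. f i *\<^sub>R axis i (1::real)) $ k = (if k \<in> A then f k else 0)"
proof -
  have "(\<Sum>i\<in>A. f i *\<^sub>R axis i (1::real)) $ k = (\<Sum>i\<in>A. if i = k then f i else 0)"
    unfolding sum_component by (rule sum.cong) (auto simp: axis_def)
  then show ?thesis by simp
qed

lemma sum_axis1: "(\<Sum>k\<in>S. axis i (1::real) $ k) = (if i \<in> S then 1 else 0)"
proof -
  have "(\<Sum>k\<in>S. axis i (1::real) $ k) = (\<Sum>k\<in>S. if k = i then 1 else 0)"
    by (rule sum.cong) (auto simp: axis_def)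
  then show ?thesis by simp
qed

lemma finite_root: "finite (root_system_A :: (real^'n::finite) set)"
proof -
  have "root_system_A \<subseteq> (\<lambda>(i,j). axis i (1::real) - axis j 1 :: real^'n) ` UNIV"
    by (auto simp: root_system_A_def)
  then show ?thesis by (rule finite_subset) simp
qed

lemma two_idx:
  assumes "CARD('n) \<ge> 2"
  obtains i j :: "'n::finite" where "i \<noteq> j"
proof -
  have "\<exists>i j::'n. i \<noteq> j"
  proof (rule ccontr)
    assume "\<not> ?thesis"
    then have "(UNIV::'n set) \<subseteq> {undefined}" by auto
    then have "CARD('n) \<le> 1" using card_mono[of "{undefined}" "UNIV::'n set"] by simp
    with assms show False by simp
  qed
  then show ?thesis using that by blast
qed

lemma root_mem: "i \<noteq> j \<Longrightarrow> axis i 1 - axis j 1 \<in> (root_system_A :: (real^'n) set)"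
  by (auto simp: root_system_A_def)

lemma subspace_sE: "subspace (sE :: (real^'n) set)"
  by (auto simp: subspace_def sE_def sum.distrib sum_distrib_left[symmetric])

definition QQ :: "(real^'n) set" where "QQ = {x. x \<in> sE \<and> (\<forall>S. (\<Sum>i\<in>S. x$i) \<le> 1)}"

lemma convex_QQ: "convex QQ"
proof (rule convexI)
  fix x y :: "real^'n" and u v :: real
  assume x: "x \<in> QQ" and y: "y \<in> QQ" and u: "0 \<le> u" and v: "0 \<le> v" and uv: "u + v = 1"
  have "(\<Sum>i\<in>UNIV. (u *\<^sub>R x + v *\<^sub>R y)$i) = u * (\<Sum>i\<in>UNIV. x$i) + v * (\<Sum>i\<in>UNIV. y$i)"
    by (simp add: sum.distrib sum_distrib_left)
  then have 1: "u *\<^sub>R x + v *\<^sub>R y \<in> sE" using x y by (simp add: QQ_def sE_def)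
  have "(\<Sum>i\<in>S. (u *\<^sub>R x + v *\<^sub>R y)$i) \<le> 1" for S
  proof -
    have "(\<Sum>i\<in>S. (u *\<^sub>R x + v *\<^sub>R y)$i) = u * (\<Sum>i\<in>S. x$i) + v * (\<Sum>i\<in>S. y$i)"
      by (simp add: sum.distrib sum_distrib_left)
    also have "\<dots> \<le> u * 1 + v * 1"
      using x y u v by (intro add_mono mult_left_mono) (auto simp: QQ_def)
    finally show ?thesis using uv by simp
  qed
  with 1 show "u *\<^sub>R x + v *\<^sub>R y \<in> QQ" by (simp add: QQ_def)
qed

lemma root_QQ: "(root_system_A :: (real^'n) set) \<subseteq> QQ"
proof
  fix r :: "real^'n" assume "r \<in> root_system_A"
  then obtain i j where r: "r = axis i 1 - axis j 1" "i \<noteq> j" by (auto simp: root_system_A_def)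
  have s: "(\<Sum>k\<in>S. r$k) = (if i \<in> S then 1 else 0) - (if j \<in> S then 1 else 0)" for S
    by (simp add: r sum_subtractf sum_axis1)
  show "r \<in> QQ" unfolding QQ_def sE_def using s[of UNIV] by (auto simp: s)
qed

lemma PA_sub_QQ: "PA \<subseteq> (QQ :: (real^'n) set)"
  unfolding root_polytope_def by (rule hull_minimal[where S=convex, OF root_QQ convex_QQ])

lemma zero_PA:
  assumes "CARD('n::finite) \<ge> 2"
  shows "(0::real^'n) \<in> PA"
proof -
  obtain i j :: 'n where ij: "i \<noteq> j" using two_idx[OF assms] by blast
  have "(1/2) *\<^sub>R (axis i 1 - axis j 1) + (1/2) *\<^sub>R (axis j 1 - axis i 1) \<in> PA"
    unfolding root_polytope_def
    by (rule convexD[OF convex_convex_hull]) 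
       (use hull_inc[OF root_mem[OF ij]] hull_inc[OF root_mem[OF ij[symmetric]]] in auto)
  moreover have "(1/2) *\<^sub>R (axis i 1 - axis j 1) + (1/2) *\<^sub>R (axis j 1 - axis i 1) = (0::real^'n)"
    by (simp add: algebra_simps)
  ultimately show ?thesis by simp
qed

lemma pos_neg_sum:
  fixes x :: "real^'n"
  assumes "x \<in> sE"
  shows "(\<Sum>j\<in>{j. x$j < 0}. - x$j) = (\<Sum>i\<in>{i. x$i > 0}. x$i)"
proof -
  have "(\<Sum>i\<in>UNIV. x$i) = (\<Sum>i\<in>UNIV. (if x$i > 0 then x$i else 0) + (if x$i < 0 then x$i else 0))"
    by (rule sum.cong) auto
  also have "\<dots> = (\<Sum>i\<in>{i. x$i > 0}. x$i) + (\<Sum>i\<in>{i. x$i < 0}. x$i)"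
    by (simp add: sum.distrib sum.If_cases)
  finally show ?thesis using assms by (simp add: sE_def sum_negf)
qed

lemma QQ_sub_PA:
  assumes "CARD('n::finite) \<ge> 2"
  shows "QQ \<subseteq> (PA :: (real^'n) set)"
proof
  fix x :: "real^'n" assume x: "x \<in> QQ"
  define Pos where "Pos = {i. x$i > 0}"
  define Neg where "Neg = {i. x$i < 0}"
  define m where "m = (\<Sum>i\<in>Pos. x$i)"
  have xE: "x \<in> sE" and xS: "\<And>S. (\<Sum>i\<in>S. x$i) \<le> 1" using x by (auto simp: QQ_def)
  have m1: "m \<le> 1" using xS by (simp add: m_def)
  have mN: "(\<Sum>j\<in>Neg. - x$j) = m" using pos_neg_sum[OF xE] by (simp add: m_def Pos_def Neg_def)
  have m0: "m \<ge> 0" unfolding m_def Pos_def by (rule sum_nonneg) simp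
  have cvx: "convex (PA :: (real^'n) set)" unfolding root_polytope_def by simp
  show "x \<in> PA"
  proof (cases "m = 0")
    case True
    have "\<forall>i. x$i \<le> 0"
    proof (rule ccontr)
      assume "\<not> ?thesis" then obtain i where "x$i > 0" by (auto simp: not_le)
      then have "x$i \<le> m" unfolding m_def Pos_def
        by (intro member_le_sum) auto
      with \<open>x$i > 0\<close> True show False by simp
    qed
    moreover have "(\<Sum>i\<in>UNIV. - x$i) = 0" using xE by (simp add: sE_def sum_negf)
    ultimately have "\<forall>i. - x$i = 0"
      using sum_nonneg_eq_0_iff[of UNIV "\<lambda>i. - x$i"] by auto
    then have "x = 0" by (simp add: vec_eq_iff)
    then show ?thesis using zero_PA[OF assms] by simp
  next
    case False
    with m0 have mp: "m > 0" by simp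
    define v where "v = (\<Sum>j\<in>Neg. (- x$j / m) *\<^sub>R axis j (1::real))"
    define z where "z i = (\<Sum>j\<in>Neg. (- x$j / m) *\<^sub>R (axis i (1::real) - axis j 1))" for i
    have cs1: "(\<Sum>j\<in>Neg. - x$j / m) = 1"
    proof -
      have "(\<Sum>j\<in>Neg. - x$j / m) = (\<Sum>j\<in>Neg. - x$j) / m" by (rule sum_divide_distrib[symmetric])
      then show ?thesis using mN mp by simp
    qed
    have zv: "z i = axis i 1 - v" for i
    proof -
      have "z i = (\<Sum>j\<in>Neg. (- x$j / m) *\<^sub>R axis i 1) - v"
        unfolding z_def v_def by (simp only: scaleR_right_diff_distrib sum_subtractf)
      also have "\<dots> = (\<Sum>j\<in>Neg. - x$j / m) *\<^sub>R axis i 1 - v"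
        by (simp only: scaleR_sum_left)
      finally show ?thesis by (simp only: cs1 scaleR_one)
    qed
    have zP: "z i \<in> PA" if "i \<in> Pos" for i
      unfolding z_def
    proof (rule convex_sum[OF _ cvx cs1])
      show "finite Neg" by simp
      show "0 \<le> - x $ j / m" if "j \<in> Neg" for j using that mp by (simp add: Neg_def divide_nonpos_pos)
      show "axis i 1 - axis j 1 \<in> PA" if "j \<in> Neg" for j
        unfolding root_polytope_def
        using \<open>i \<in> Pos\<close> that by (intro hull_inc root_mem) (auto simp: Pos_def Neg_def)
    qed
    define y where "y = (\<Sum>i\<in>Pos. (x$i / m) *\<^sub>R z i)"
    have cs2: "(\<Sum>i\<in>Pos. x$i / m) = 1" using mp by (simp add: m_def sum_divide_distrib[symmetric])
    have yP: "y \<in> PA" unfolding y_def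
      by (rule convex_sum[OF _ cvx cs2]) (use mp zP in \<open>auto simp: Pos_def\<close>)
    have "y = (\<Sum>i\<in>Pos. (x$i / m) *\<^sub>R axis i 1) - v"
      by (simp add: y_def zv scaleR_right_diff_distrib sum_subtractf scaleR_sum_left[symmetric] cs2)
    then have "m *\<^sub>R y = (\<Sum>i\<in>Pos. x$i *\<^sub>R axis i 1) + (\<Sum>j\<in>Neg. x$j *\<^sub>R axis j 1)"
      using mp by (simp add: v_def scaleR_right_diff_distrib scaleR_sum_right sum_negf[symmetric] del: sum_negf)
    also have "\<dots> = x"
      by (simp add: vec_eq_iff sum_axis Pos_def Neg_def del: sum_component)
    finally have xy: "x = m *\<^sub>R y + (1 - m) *\<^sub>R 0" by simp
    show ?thesis unfolding xy
      by (rule convexD[OF cvx yP zero_PA[OF assms]]) (use m0 m1 in auto)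
  qed
qed

lemma PA_eq:
  assumes "CARD('n::finite) \<ge> 2"
  shows "(PA :: (real^'n) set) = QQ"
  using PA_sub_QQ QQ_sub_PA[OF assms] by blast

lemma E_scale:
  assumes "CARD('n::finite) \<ge> 2" and x: "(x::real^'n) \<in> sE"
  shows "\<exists>l>0. \<exists>y\<in>PA. x = l *\<^sub>R y"
proof -
  define l where "l = 1 + (\<Sum>i\<in>UNIV. \<bar>x$i\<bar>)"
  have a0: "(\<Sum>i\<in>UNIV. \<bar>x$i\<bar>) \<ge> 0" by (rule sum_nonneg) simp
  then have lp: "l > 0" unfolding l_def by linarith
  define y where "y = (1/l) *\<^sub>R x"
  have "y \<in> QQ" unfolding QQ_def
  proof (intro CollectI conjI allI)
    show "y \<in> sE" using x by (simp add: sE_def y_def sum_divide_distrib[symmetric])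
    fix S :: "'n set"
    have "(\<Sum>i\<in>S. x$i) \<le> (\<Sum>i\<in>S. \<bar>x$i\<bar>)" by (rule sum_mono) simp
    also have "\<dots> \<le> (\<Sum>i\<in>UNIV. \<bar>x$i\<bar>)" by (rule sum_mono2) auto
    also have "\<dots> \<le> l" by (simp add: l_def)
    finally have "(\<Sum>i\<in>S. x$i) \<le> l" .
    then show "(\<Sum>i\<in>S. y$i) \<le> 1" using lp
      by (simp add: y_def sum_divide_distrib[symmetric] divide_le_eq)
  qed
  then have "y \<in> PA" using PA_eq[OF assms(1)] by simp
  moreover have "x = l *\<^sub>R y" using lp by (simp add: y_def)
  ultimately show ?thesis using lp by blast
qed

lemma aff_PA:
  assumes "CARD('n::finite) \<ge> 2"
  shows "affine hull (PA :: (real^'n) set) = sE"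
proof (rule equalityI)
  show "affine hull (PA::(real^'n) set) \<subseteq> sE"
    by (rule hull_minimal) (use PA_sub_QQ subspace_imp_affine[OF subspace_sE] in \<open>auto simp: QQ_def\<close>)
  show "sE \<subseteq> affine hull (PA::(real^'n) set)"
  proof
    fix x :: "real^'n" assume "x \<in> sE"
    then obtain l y where "l > 0" "y \<in> PA" "x = l *\<^sub>R y" using E_scale[OF assms] by blast
    then have xe: "x = l *\<^sub>R y + (1 - l) *\<^sub>R 0" by simp
    have "y \<in> affine hull PA" "(0::real^'n) \<in> affine hull PA"
      using \<open>y \<in> PA\<close> zero_PA[OF assms] by (auto intro: hull_inc)
    then have "l *\<^sub>R y + (1 - l) *\<^sub>R 0 \<in> affine hull PA"
      by (intro mem_affine[OF affine_affine_hull]) auto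
    then show "x \<in> affine hull PA" using xe by simp
  qed
qed

lemma span_root:
  assumes "CARD('n::finite) \<ge> 2"
  shows "span (root_system_A :: (real^'n) set) = sE"
proof
  show "span root_system_A \<subseteq> (sE :: (real^'n) set)"
    by (rule span_minimal[OF _ subspace_sE]) (use root_QQ in \<open>auto simp: QQ_def\<close>)
  show "sE \<subseteq> span (root_system_A :: (real^'n) set)"
  proof
    fix x :: "real^'n" assume "x \<in> sE"
    then obtain l y where "l > 0" "y \<in> PA" "x = l *\<^sub>R y" using E_scale[OF assms] by blast
    then have "y \<in> span root_system_A"
      using convex_hull_subset_span unfolding root_polytope_def by blast
    then show "x \<in> span root_system_A" using \<open>x = l *\<^sub>R y\<close> by (simp add: span_mul)
  qed
qed

definition Hs :: "'n set \<Rightarrow> (real^'n) set" where "Hs S = {x. ind S \<bullet> x \<le> 1}"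
definition PS :: "'n set set" where "PS = {S. S \<noteq> {} \<and> S \<noteq> UNIV}"
definition Fc :: "'n set \<Rightarrow> (real^'n) set" where "Fc S = PA \<inter> {x. ind S \<bullet> x = 1}"

lemma ind_axis2: "ind A \<bullet> (2 *\<^sub>R axis i (1::real)) = (if i \<in> A then 2 else 0)"
proof -
  have "ind A \<bullet> (2 *\<^sub>R axis i (1::real)) = 2 * (\<Sum>k\<in>A. axis i (1::real) $ k)"
    by (simp add: ind_inner sum_distrib_left)
  then show ?thesis by (simp add: sum_axis1)
qed

lemma ind_axis: "ind A \<bullet> axis i (1::real) = (if i \<in> A then 1 else 0)"
  by (simp add: ind_inner sum_axis1)

lemma Hs_inj: "Hs S = Hs T \<Longrightarrow> S = T"
proof (rule ccontr)
  assume eq: "Hs S = Hs T" and ne: "S \<noteq> T"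
  then obtain i where "(i \<in> S \<and> i \<notin> T) \<or> (i \<in> T \<and> i \<notin> S)" by blast
  then show False
  proof
    assume "i \<in> S \<and> i \<notin> T"
    then have "2 *\<^sub>R axis i 1 \<in> Hs T" "2 *\<^sub>R axis i 1 \<notin> Hs S" by (auto simp: Hs_def ind_axis)
    with eq show False by simp
  next
    assume "i \<in> T \<and> i \<notin> S"
    then have "2 *\<^sub>R axis i 1 \<in> Hs S" "2 *\<^sub>R axis i 1 \<notin> Hs T" by (auto simp: Hs_def ind_axis)
    with eq show False by simp
  qed
qed

lemma z_exists:
  assumes "S0 \<in> PS"
  shows "\<exists>z::real^'n::finite. z \<in> sE \<and> ind S0 \<bullet> z > 1 \<and> (\<forall>T\<in>PS. T \<noteq> S0 \<longrightarrow> ind T \<bullet> z \<le> 1)"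
proof -
  define N where "N = real CARD('n)"
  define k where "k = real (card S0)"
  define m where "m = real (card (- S0))"
  define g where "g = 1 + 1 / N"
  have S0: "S0 \<noteq> {}" "S0 \<noteq> UNIV" using assms by (auto simp: PS_def)
  have kpos: "k \<ge> 1" using S0 by (simp add: k_def Suc_le_eq card_gt_0_iff)
  have "- S0 \<noteq> {}" using S0 by auto
  then have mpos: "m \<ge> 1" by (simp add: m_def Suc_le_eq card_gt_0_iff)
  have kN: "k \<le> N" unfolding k_def N_def by (simp add: card_mono)
  have mN: "m \<le> N" unfolding m_def N_def by (simp add: card_mono)
  have Npos: "N > 0" using kpos kN by simp
  have g1: "g > 1" using Npos by (simp add: g_def)
  have gNN: "g * N = N + 1" using Npos by (simp add: g_def field_simps)
  have gk: "g / k \<ge> 1 / N" using kN kpos Npos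
    by (simp add: divide_simps gNN)
  have gm: "g / m \<ge> 1 / N" using mN mpos Npos
    by (simp add: divide_simps gNN)
  have gN: "g - 1 / N = 1" by (simp add: g_def)
  define z :: "real^'n" where "z = (\<chi> i. if i \<in> S0 then g / k else - (g / m))"
  have sz: "ind A \<bullet> z = real (card (A \<inter> S0)) * (g / k) - real (card (A - S0)) * (g / m)" for A
  proof -
    have "ind A \<bullet> z = (\<Sum>i\<in>A. if i \<in> S0 then g / k else - (g / m))"
      by (simp add: ind_inner z_def)
    also have "\<dots> = (\<Sum>i\<in>A \<inter> S0. g / k) + (\<Sum>i\<in>A - S0. - (g / m))"
      by (simp add: sum.If_cases Diff_eq)
    finally show ?thesis by simp
  qed
  have "z \<in> sE"
  proof -
    have e1: "real (card (UNIV \<inter> S0)) = k" "real (card (UNIV - S0)) = m"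
      by (simp_all add: k_def m_def Compl_eq_Diff_UNIV)
    have "ind UNIV \<bullet> z = 0" using kpos mpos by (simp only: sz e1) simp
    then show ?thesis by (simp add: sE_def ind_inner)
  qed
  moreover have "ind S0 \<bullet> z > 1" using kpos g1 S0 by (simp add: sz k_def)
  moreover have "ind T \<bullet> z \<le> 1" if T: "T \<in> PS" "T \<noteq> S0" for T
  proof (cases "S0 \<subseteq> T")
    case True
    then have "T - S0 \<noteq> {}" using T by auto
    then have c1: "real (card (T - S0)) \<ge> 1" by (simp add: Suc_le_eq card_gt_0_iff)
    have "T \<inter> S0 = S0" using True by auto
    then have "ind T \<bullet> z = g - real (card (T - S0)) * (g / m)" using kpos S0 by (simp add: sz k_def)
    also have "\<dots> \<le> g - 1 * (g / m)"
      using c1 mpos g1 by (intro diff_left_mono mult_right_mono) auto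
    also have "\<dots> \<le> g - 1 / N" using gm by simp
    finally show ?thesis using gN by simp
  next
    case False
    then have "T \<inter> S0 \<subset> S0" by auto
    then have "card (T \<inter> S0) < card S0" by (rule psubset_card_mono[OF finite])
    then have c: "real (card (T \<inter> S0)) \<le> k - 1" by (simp add: k_def)
    have "ind T \<bullet> z \<le> real (card (T \<inter> S0)) * (g / k)"
      using mpos g1 by (simp add: sz)
    also have "\<dots> \<le> (k - 1) * (g / k)" using c g1 kpos by (intro mult_right_mono) auto
    also have "\<dots> = g - g / k" using kpos by (simp add: divide_simps algebra_simps)
    also have "\<dots> \<le> g - 1 / N" using gk by simp
    finally show ?thesis using gN by simp
  qed
  ultimately show ?thesis by blast
qed

lemma facet_char:
  assumes "CARD('n::finite) \<ge> 2"
  shows "F facet_of (PA :: (real^'n) set) \<longleftrightarrow> (\<exists>S\<in>PS. F = Fc S)"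
proof -
  define a where "a h = ind (SOME S. S \<in> PS \<and> h = Hs S)" for h :: "(real^'n) set"
  have aHs: "a (Hs S) = ind S" if "S \<in> PS" for S
  proof -
    have "(SOME S'. S' \<in> PS \<and> Hs S = Hs S') = S"
      by (rule some_equality) (use that Hs_inj in auto)
    then show ?thesis by (simp add: a_def)
  qed
  have PQ: "(PA :: (real^'n) set) = QQ" by (rule PA_eq[OF assms])
  have fin: "finite (Hs ` PS)" by simp
  have seq: "(PA::(real^'n) set) = affine hull PA \<inter> \<Inter>(Hs ` PS)"
  proof
    show "(PA::(real^'n) set) \<subseteq> affine hull PA \<inter> \<Inter>(Hs ` PS)"
      using hull_subset[of "PA::(real^'n) set" affine] PA_sub_QQ
      by (auto simp: QQ_def Hs_def ind_inner)
    show "affine hull PA \<inter> \<Inter>(Hs ` PS) \<subseteq> (PA::(real^'n) set)"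
    proof
      fix x :: "real^'n" assume x: "x \<in> affine hull PA \<inter> \<Inter>(Hs ` PS)"
      then have xE: "x \<in> sE" using aff_PA[OF assms] by auto
      have "(\<Sum>i\<in>S. x$i) \<le> 1" for S
      proof (cases "S \<in> PS")
        case True then show ?thesis using x by (auto simp: Hs_def ind_inner)
      next
        case False
        then have "S = {} \<or> S = UNIV" by (auto simp: PS_def)
        then show ?thesis using xE by (auto simp: sE_def)
      qed
      with xE show "x \<in> PA" by (simp add: PQ QQ_def)
    qed
  qed
  have faceq: "a h \<noteq> 0 \<and> h = {x. a h \<bullet> x \<le> 1}" if hh: "h \<in> Hs ` PS" for h :: "(real^'n) set"
  proof -
    obtain S where S: "S \<in> PS" "h = Hs S" using hh by blast
    then obtain i where "i \<in> S" by (auto simp: PS_def)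
    then have "ind S $ i = 1" by (simp add: ind_def)
    then have "ind S \<noteq> 0" by auto
    then show ?thesis using S aHs by (simp add: Hs_def)
  qed
  have psub: "(PA::(real^'n) set) \<subset> affine hull PA \<inter> \<Inter>F'" if F': "F' \<subset> Hs ` PS" for F' :: "(real^'n) set set"
  proof -
    obtain S0 where S0: "S0 \<in> PS" "Hs S0 \<notin> F'" using F' by blast
    obtain z :: "real^'n" where z: "z \<in> sE" "ind S0 \<bullet> z > 1" "\<forall>T\<in>PS. T \<noteq> S0 \<longrightarrow> ind T \<bullet> z \<le> 1"
      using z_exists[OF S0(1)] by blast
    have "PA \<subseteq> affine hull PA \<inter> \<Inter>F'" using seq F' by blast
    moreover have "z \<in> affine hull PA" using z aff_PA[OF assms] by simp
    moreover have "z \<in> \<Inter>F'"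
    proof
      fix h :: "(real^'n) set" assume "h \<in> F'"
      then obtain T where T: "T \<in> PS" "h = Hs T" using F' by blast
      then have "T \<noteq> S0" using S0 \<open>h \<in> F'\<close> by auto
      then show "z \<in> h" using z T by (simp add: Hs_def)
    qed
    moreover have "z \<notin> PA" using z(2) by (auto simp: PQ QQ_def ind_inner not_le)
    ultimately show ?thesis by blast
  qed
  have "F facet_of PA \<longleftrightarrow> (\<exists>h. h \<in> Hs ` PS \<and> F = PA \<inter> {x. a h \<bullet> x = 1})"
    by (rule facet_of_polyhedron_explicit[OF fin seq faceq psub])
  also have "\<dots> \<longleftrightarrow> (\<exists>S\<in>PS. F = Fc S)"
    using aHs by (auto simp: Fc_def)
  finally show ?thesis .
qed



definition sgnS :: "'n set \<Rightarrow> real^'n \<Rightarrow> bool" where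
  "sgnS S x \<longleftrightarrow> (\<forall>i. (i \<in> S \<longrightarrow> 0 \<le> x$i) \<and> (i \<notin> S \<longrightarrow> x$i \<le> 0))"
definition Kc :: "'n set \<Rightarrow> (real^'n) set" where "Kc S = {x \<in> sE. sgnS S x}"

lemma Fc_char:
  assumes "CARD('n::finite) \<ge> 2"
  shows "Fc S = {x::real^'n. x \<in> sE \<and> sgnS S x \<and> (\<Sum>i\<in>S. x$i) = 1}"
proof (rule equalityI)
  have PQ: "(PA :: (real^'n) set) = QQ" by (rule PA_eq[OF assms])
  show "Fc S \<subseteq> {x::real^'n. x \<in> sE \<and> sgnS S x \<and> (\<Sum>i\<in>S. x$i) = 1}"
  proof
    fix x :: "real^'n" assume x: "x \<in> Fc S"
    then have xE: "x \<in> sE" and xS: "\<And>T. (\<Sum>i\<in>T. x$i) \<le> 1" and s1: "(\<Sum>i\<in>S. x$i) = 1"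
      by (auto simp: Fc_def PQ QQ_def ind_inner)
    have "sgnS S x" unfolding sgnS_def
    proof (intro allI conjI impI)
      fix i assume i: "i \<in> S"
      show "0 \<le> x$i"
      proof (rule ccontr)
        assume "\<not> 0 \<le> x$i"
        moreover have "(\<Sum>k\<in>S - {i}. x$k) = (\<Sum>k\<in>S. x$k) - x$i" using i by (simp add: sum_diff1)
        ultimately show False using xS[of "S - {i}"] s1 by simp
      qed
    next
      fix i assume i: "i \<notin> S"
      show "x$i \<le> 0"
      proof (rule ccontr)
        assume "\<not> x$i \<le> 0"
        moreover have "(\<Sum>k\<in>insert i S. x$k) = x$i + (\<Sum>k\<in>S. x$k)" using i by simp
        ultimately show False using xS[of "insert i S"] s1 by simp
      qed
    qed
    with xE s1 show "x \<in> {x::real^'n. x \<in> sE \<and> sgnS S x \<and> (\<Sum>i\<in>S. x$i) = 1}" by simp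
  qed
  show "{x::real^'n. x \<in> sE \<and> sgnS S x \<and> (\<Sum>i\<in>S. x$i) = 1} \<subseteq> Fc S"
  proof
    fix x :: "real^'n" assume "x \<in> {x::real^'n. x \<in> sE \<and> sgnS S x \<and> (\<Sum>i\<in>S. x$i) = 1}"
    then have xE: "x \<in> sE" and sg: "sgnS S x" and s1: "(\<Sum>i\<in>S. x$i) = 1" by auto
    have "(\<Sum>i\<in>T. x$i) \<le> 1" for T
    proof -
      have "(\<Sum>i\<in>T. x$i) = (\<Sum>i\<in>T \<inter> S. x$i) + (\<Sum>i\<in>T - S. x$i)" by (rule sum.Int_Diff) simp
      also have "(\<Sum>i\<in>T - S. x$i) \<le> 0" using sg by (intro sum_nonpos) (auto simp: sgnS_def)
      also have "(\<Sum>i\<in>T \<inter> S. x$i) \<le> (\<Sum>i\<in>S. x$i)"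
        using sg by (intro sum_mono2) (auto simp: sgnS_def)
      finally show ?thesis using s1 by simp
    qed
    then show "x \<in> Fc S" using xE s1 by (simp add: Fc_def PQ QQ_def ind_inner)
  qed
qed

lemma zero_of_nonpos:
  assumes "(x::real^'n) \<in> sE" "\<forall>i. x$i \<le> 0" shows "x = 0"
proof -
  have "(\<Sum>i\<in>UNIV. - x$i) = 0" using assms by (simp add: sE_def sum_negf)
  then have "\<forall>i. - x$i = 0" using assms(2) sum_nonneg_eq_0_iff[of UNIV "\<lambda>i. - x$i"] by auto
  then show ?thesis by (simp add: vec_eq_iff)
qed

lemma zero_of_nonneg:
  assumes "(x::real^'n) \<in> sE" "\<forall>i. x$i \<ge> 0" shows "x = 0"
proof -
  have "(\<Sum>i\<in>UNIV. x$i) = 0" using assms by (simp add: sE_def)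
  then have "\<forall>i. x$i = 0" using assms(2) sum_nonneg_eq_0_iff[of UNIV "\<lambda>i. x$i"] by auto
  then show ?thesis by (simp add: vec_eq_iff)
qed

lemma root_in_Fc:
  assumes "CARD('n::finite) \<ge> 2" "s \<in> S" "j \<notin> S"
  shows "(axis s 1 - axis j 1 :: real^'n) \<in> Fc S"
proof -
  have sj: "s \<noteq> j" using assms by auto
  have "(axis s 1 - axis j 1 :: real^'n) \<in> sE" using root_QQ root_mem[OF sj] by (auto simp: QQ_def)
  moreover have "sgnS S (axis s 1 - axis j 1 :: real^'n)"
    using assms by (auto simp: sgnS_def axis_def)
  moreover have "(\<Sum>i\<in>S. (axis s 1 - axis j 1 :: real^'n) $ i) = 1"
    using assms by (simp add: sum_subtractf sum_axis1)
  ultimately show ?thesis by (simp add: Fc_char[OF assms(1)])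
qed

lemma cone_Fc:
  assumes "CARD('n::finite) \<ge> 2" "S \<in> PS"
  shows "cone_on (Fc S) = (Kc S :: (real^'n) set)"
proof (rule equalityI)
  show "cone_on (Fc S) \<subseteq> (Kc S :: (real^'n) set)"
  proof
    fix x :: "real^'n" assume "x \<in> cone_on (Fc S)"
    then obtain t y where ty: "x = t *\<^sub>R y" "t \<ge> 0" "y \<in> Fc S" by (auto simp: cone_on_def)
    then have yE: "y \<in> sE" and sg: "sgnS S y" by (auto simp: Fc_char[OF assms(1)])
    have "x \<in> sE" using yE ty by (simp add: sE_def sum_distrib_left[symmetric])
    moreover have "sgnS S x" using sg ty by (auto simp: sgnS_def mult_nonneg_nonpos)
    ultimately show "x \<in> Kc S" by (simp add: Kc_def)
  qed
  show "(Kc S :: (real^'n) set) \<subseteq> cone_on (Fc S)"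
  proof
    fix x :: "real^'n" assume "x \<in> Kc S"
    then have xE: "x \<in> sE" and sg: "sgnS S x" by (auto simp: Kc_def)
    define t where "t = (\<Sum>i\<in>S. x$i)"
    have t0: "t \<ge> 0" unfolding t_def using sg by (intro sum_nonneg) (auto simp: sgnS_def)
    show "x \<in> cone_on (Fc S)"
    proof (cases "t = 0")
      case True
      have "\<forall>i\<in>S. x$i = 0"
      proof -
        have "\<forall>i\<in>S. 0 \<le> x$i" using sg by (simp add: sgnS_def)
        then show ?thesis using True sum_nonneg_eq_0_iff[of S "\<lambda>i. x$i"] by (simp add: t_def)
      qed
      have "\<forall>i. x$i \<le> 0"
      proof
        fix i show "x$i \<le> 0" using sg \<open>\<forall>i\<in>S. x$i = 0\<close> by (cases "i \<in> S") (auto simp: sgnS_def)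
      qed
      then have "x = 0" by (rule zero_of_nonpos[OF xE])
      obtain s j where "s \<in> S" "j \<notin> S" using assms(2) by (auto simp: PS_def)
      then have "axis s 1 - axis j 1 \<in> Fc S" by (rule root_in_Fc[OF assms(1)])
      then show ?thesis using \<open>x = 0\<close> unfolding cone_on_def
        by (intro CollectI exI[of _ 0] exI[of _ "axis s 1 - axis j 1"]) auto
    next
      case False
      with t0 have tp: "t > 0" by simp
      define y where "y = (1/t) *\<^sub>R x"
      have "y \<in> sE" using xE by (simp add: y_def sE_def sum_divide_distrib[symmetric])
      moreover have "sgnS S y" using sg tp by (auto simp: y_def sgnS_def divide_nonpos_pos)
      moreover have "(\<Sum>i\<in>S. y$i) = 1" using tp by (simp add: y_def t_def sum_divide_distrib[symmetric])
      ultimately have "y \<in> Fc S" by (simp add: Fc_char[OF assms(1)])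
      moreover have "x = t *\<^sub>R y" using tp by (simp add: y_def)
      ultimately show ?thesis unfolding cone_on_def using t0
        by (intro CollectI exI[of _ t] exI[of _ y]) simp
    qed
  qed
qed

lemma polytope_PA: "polytope (PA :: (real^'n::finite) set)"
  unfolding root_polytope_def by (rule polytope_convex_hull[OF finite_root])

lemma Fc_facet:
  assumes "CARD('n::finite) \<ge> 2" "S \<in> PS"
  shows "(Fc S :: (real^'n) set) facet_of PA"
  by (rule facet_char[OF assms(1), THEN iffD2]) (use assms(2) in blast)

lemma face_codim2_exists:
  assumes "CARD('n::finite) \<ge> 2" "S \<in> PS" "T \<in> PS"
    and y: "(y::real^'n) \<in> Fc S \<inter> Fc T" and ne: "Fc S \<inter> Fc T \<noteq> (Fc S :: (real^'n) set)"
  shows "\<exists>G. G face_of (PA :: (real^'n) set) \<and> aff_dim G = aff_dim (PA :: (real^'n) set) - 2 \<and> y \<in> G"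
proof -
  have FS: "(Fc S :: (real^'n) set) facet_of PA" and FT: "(Fc T :: (real^'n) set) facet_of PA"
    using Fc_facet[OF assms(1,2)] Fc_facet[OF assms(1,3)] by simp_all
  have H: "Fc S \<inter> Fc T face_of (PA :: (real^'n) set)"
    by (rule face_of_Int[OF facet_of_imp_face_of[OF FS] facet_of_imp_face_of[OF FT]])
  have HF: "Fc S \<inter> Fc T face_of (Fc S :: (real^'n) set)"
    by (rule face_of_subset[OF H Int_lower1 facet_of_imp_subset[OF FS]])
  have pF: "polytope (Fc S :: (real^'n) set)"
    by (rule face_of_polytope_polytope[OF polytope_PA facet_of_imp_face_of[OF FS]])
  have Hne: "Fc S \<inter> Fc T \<noteq> {}" using y by blast
  obtain G where G: "G facet_of (Fc S :: (real^'n) set)" "Fc S \<inter> Fc T \<subseteq> G"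
    by (rule face_of_polyhedron_subset_facet[OF polytope_imp_polyhedron[OF pF] HF Hne ne])
  have "G face_of (PA :: (real^'n) set)"
    by (rule face_of_trans[OF facet_of_imp_face_of[OF G(1)] facet_of_imp_face_of[OF FS]])
  moreover have "aff_dim G = aff_dim (PA :: (real^'n) set) - 2"
  proof -
    have a1: "aff_dim G = aff_dim (Fc S :: (real^'n) set) - 1" using G(1) unfolding facet_of_def by (elim conjE)
    have a2: "aff_dim (Fc S :: (real^'n) set) = aff_dim (PA :: (real^'n) set) - 1" using FS unfolding facet_of_def by (elim conjE)
    show ?thesis using a1 a2 by linarith
  qed
  moreover have "y \<in> G" using G(2) y by (rule subsetD)
  ultimately show ?thesis by blast
qed


lemma arr_mem:
  "x \<in> \<Union>(root_arrangement (root_system_A :: (real^'n) set)) \<longleftrightarrow>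
   (\<exists>G. G face_of (PA :: (real^'n) set) \<and> aff_dim G = aff_dim (PA :: (real^'n) set) - 2 \<and> x \<in> span G)"
  unfolding root_arrangement_def by blast

lemma arr_sub:
  assumes "CARD('n::finite) \<ge> 2"
    and G: "G face_of (PA :: (real^'n) set)" "aff_dim G = aff_dim (PA :: (real^'n) set) - 2"
    and x: "x \<in> span G"
  shows "x \<in> sE \<and> (\<exists>a. x$a = 0)"
proof (cases "G = {}")
  case True
  then have "x = 0" using x by simp
  then show ?thesis using subspace_0[OF subspace_sE] by auto
next
  case False
  have GP: "G \<noteq> PA" using G(2) by auto
  have polyP: "polyhedron (PA :: (real^'n) set)" by (rule polytope_imp_polyhedron[OF polytope_PA])
  define FF where "FF = {F. F facet_of (PA :: (real^'n) set) \<and> G \<subseteq> F}"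
  have Geq: "G = \<Inter>FF" unfolding FF_def by (rule face_of_polyhedron[OF polyP G(1) False GP])
  have "\<exists>F1\<in>FF. \<exists>F2\<in>FF. F1 \<noteq> F2"
  proof (rule ccontr)
    assume no: "\<not> ?thesis"
    show False
    proof (cases "FF = {}")
      case True
      then have "G = UNIV" using Geq by simp
      moreover have "bounded G"
        by (rule bounded_subset[OF polytope_imp_bounded[OF polytope_PA] face_of_imp_subset[OF G(1)]])
      ultimately show False by simp
    next
      case False
      then obtain F0 where F0: "F0 \<in> FF" by blast
      then have "FF = {F0}" using no by blast
      then have "G = F0" using Geq by simp
      then have "aff_dim G = aff_dim (PA :: (real^'n) set) - 1" using F0 by (simp add: FF_def facet_of_def)
      with G(2) show False by simp
    qed
  qed
  then obtain F1 F2 where F12: "F1 \<in> FF" "F2 \<in> FF" "F1 \<noteq> F2" by blast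
  obtain S where S: "S \<in> PS" "F1 = Fc S" using F12(1) facet_char[OF assms(1)] by (auto simp: FF_def)
  obtain T where T: "T \<in> PS" "F2 = Fc T" using F12(2) facet_char[OF assms(1)] by (auto simp: FF_def)
  have "S \<noteq> T" using S T F12 by auto
  then obtain a where a: "(a \<in> S \<and> a \<notin> T) \<or> (a \<in> T \<and> a \<notin> S)" by blast
  have GFF: "G \<subseteq> Fc S" "G \<subseteq> Fc T" using S T F12 by (auto simp: FF_def)
  have Ga: "G \<subseteq> {y. y$a = 0}"
  proof
    fix y assume "y \<in> G"
    then have "sgnS S y" "sgnS T y" using GFF by (auto simp: Fc_char[OF assms(1)])
    then show "y \<in> {y. y$a = 0}" using a by (auto simp: sgnS_def intro: order.antisym)
  qed
  have GE: "G \<subseteq> sE"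
    using face_of_imp_subset[OF G(1)] PA_sub_QQ by (auto simp: QQ_def)
  have sub: "subspace ({y::real^'n. y$a = 0} \<inter> sE)"
    by (rule subspace_inter[OF _ subspace_sE]) (auto simp: subspace_def)
  have "span G \<subseteq> {y. y$a = 0} \<inter> sE"
    by (rule span_minimal[OF _ sub]) (use Ga GE in blast)
  then show ?thesis using x by blast
qed

lemma arr_sup:
  assumes "CARD('n::finite) \<ge> 2"
    and x: "(x::real^'n) \<in> sE" "x$a = 0"
  shows "\<exists>G. G face_of (PA :: (real^'n) set) \<and> aff_dim G = aff_dim (PA :: (real^'n) set) - 2 \<and> x \<in> span G"
proof (cases "x = 0")
  case False
  define Pos where "Pos = {i. x$i > 0}"
  define T where "T = insert a Pos"
  have aP: "a \<notin> Pos" using x by (simp add: Pos_def)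
  have Pne: "Pos \<noteq> {}"
  proof
    assume "Pos = {}"
    then have "\<forall>i. x$i \<le> 0" by (auto simp: Pos_def not_less)
    then show False using zero_of_nonpos[OF x(1)] False by simp
  qed
  have TU: "T \<noteq> UNIV"
  proof
    assume "T = UNIV"
    then have "\<forall>i. x$i \<ge> 0" using x(2) by (auto simp: T_def Pos_def) (metis UNIV_I insertE mem_Collect_eq order.strict_implies_order order_refl)
    then show False using zero_of_nonneg[OF x(1)] False by simp
  qed
  have PPS: "Pos \<in> PS" using Pne TU by (auto simp: PS_def T_def)
  have TPS: "T \<in> PS" using TU by (auto simp: PS_def T_def)
  define t where "t = (\<Sum>i\<in>Pos. x$i)"
  have tp: "t > 0" unfolding t_def using Pne by (intro sum_pos) (auto simp: Pos_def)
  define y where "y = (1/t) *\<^sub>R x"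
  have yE: "y \<in> sE" using x(1) by (simp add: y_def sE_def sum_divide_distrib[symmetric])
  have yS: "(\<Sum>i\<in>Pos. y$i) = 1" using tp by (simp add: y_def t_def sum_divide_distrib[symmetric])
  have ya: "y$a = 0" using x(2) by (simp add: y_def)
  have y1: "y \<in> Fc Pos"
  proof -
    have "sgnS Pos y" using tp by (auto simp: sgnS_def y_def Pos_def not_less divide_nonpos_pos)
    then show ?thesis using yE yS by (simp add: Fc_char[OF assms(1)])
  qed
  have y2: "y \<in> Fc T"
  proof -
    have "sgnS T y" using tp ya by (auto simp: sgnS_def y_def T_def Pos_def not_less divide_nonpos_pos)
    moreover have "(\<Sum>i\<in>T. y$i) = 1" using aP yS ya by (simp add: T_def)
    ultimately show ?thesis using yE by (simp add: Fc_char[OF assms(1)])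
  qed
  obtain s where s: "s \<in> Pos" using Pne by blast
  have r1: "axis s 1 - axis a 1 \<in> (Fc Pos :: (real^'n) set)" by (rule root_in_Fc[OF assms(1) s aP])
  have "axis s 1 - axis a 1 \<notin> (Fc T :: (real^'n) set)"
  proof
    assume "axis s 1 - axis a 1 \<in> (Fc T :: (real^'n) set)"
    then have "sgnS T (axis s 1 - axis a 1 :: real^'n)" by (simp add: Fc_char[OF assms(1)])
    moreover have "s \<noteq> a" using s aP by auto
    ultimately show False by (auto simp: sgnS_def T_def axis_def)
  qed
  then have ne: "Fc Pos \<inter> Fc T \<noteq> (Fc Pos :: (real^'n) set)" using r1 by blast
  obtain G where G: "G face_of (PA :: (real^'n) set)" "aff_dim G = aff_dim (PA :: (real^'n) set) - 2" "y \<in> G"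
    using face_codim2_exists[OF assms(1) PPS TPS _ ne] y1 y2 by blast
  have "x = t *\<^sub>R y" using tp by (simp add: y_def)
  then have "x \<in> span G" using G(3) by (simp add: span_mul span_base)
  then show ?thesis using G by blast
next
  case True
  obtain i0 j0 :: 'n where ij: "i0 \<noteq> j0" using two_idx[OF assms(1)] by blast
  have SPS: "{i0} \<in> PS" using ij by (auto simp: PS_def)
  have F: "(Fc {i0} :: (real^'n) set) facet_of PA" by (rule Fc_facet[OF assms(1) SPS])
  show ?thesis
  proof (cases "aff_dim (Fc {i0} :: (real^'n) set) > 0")
    case True
    have pF: "polytope (Fc {i0} :: (real^'n) set)"
      by (rule face_of_polytope_polytope[OF polytope_PA facet_of_imp_face_of[OF F]])
    obtain G where G: "G facet_of (Fc {i0} :: (real^'n) set)" by (rule polytope_facet_exists[OF pF True])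
    have "G face_of (PA :: (real^'n) set)"
      by (rule face_of_trans[OF facet_of_imp_face_of[OF G] facet_of_imp_face_of[OF F]])
    moreover have "aff_dim G = aff_dim (PA :: (real^'n) set) - 2"
    proof -
      have a1: "aff_dim G = aff_dim (Fc {i0} :: (real^'n) set) - 1" using G unfolding facet_of_def by (elim conjE)
      have a2: "aff_dim (Fc {i0} :: (real^'n) set) = aff_dim (PA :: (real^'n) set) - 1" using F unfolding facet_of_def by (elim conjE)
      show ?thesis using a1 a2 by linarith
    qed
    moreover have "x \<in> span G" using \<open>x = 0\<close> by (simp add: span_zero)
    ultimately show ?thesis by blast
  next
    case False
    have "Fc {i0} \<noteq> ({} :: (real^'n) set)" using F by (simp add: facet_of_def)
    then have "aff_dim (Fc {i0} :: (real^'n) set) \<ge> 0" using aff_dim_negative_iff[of "Fc {i0} :: (real^'n) set"] by linarith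
    then have "aff_dim (Fc {i0} :: (real^'n) set) = 0" using False by simp
    then have "aff_dim (PA :: (real^'n) set) = 1" using F by (simp add: facet_of_def)
    then show ?thesis using \<open>x = 0\<close> by (intro exI[of _ "{}"]) simp
  qed
qed

lemma arr_union:
  assumes "CARD('n::finite) \<ge> 2"
  shows "\<Union>(root_arrangement (root_system_A :: (real^'n) set)) = {x. x \<in> sE \<and> (\<exists>a. x$a = 0)}"
proof (rule equalityI)
  show "\<Union>(root_arrangement (root_system_A :: (real^'n) set)) \<subseteq> {x. x \<in> sE \<and> (\<exists>a. x$a = 0)}"
    using arr_sub[OF assms] arr_mem by blast
  show "{x. x \<in> sE \<and> (\<exists>a. x$a = 0)} \<subseteq> \<Union>(root_arrangement (root_system_A :: (real^'n) set))"
    using arr_sup[OF assms] arr_mem by blast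
qed


definition Cc :: "'n set \<Rightarrow> (real^'n) set" where
  "Cc S = {x \<in> sE. \<forall>i. (i \<in> S \<longrightarrow> x$i > 0) \<and> (i \<notin> S \<longrightarrow> x$i < 0)}"
definition UU :: "(real^'n) set" where "UU = {x. x \<in> sE \<and> (\<forall>a. x$a \<noteq> 0)}"

lemma pos_comb:
  fixes u v a b :: real
  assumes "0 \<le> u" "0 \<le> v" "u + v = 1" "0 < a" "0 < b"
  shows "0 < u * a + v * b"
proof (cases "u = 0")
  case True
  then have "v = 1" using assms by simp
  then show ?thesis using assms True by simp
next
  case False
  then have "0 < u * a" using assms by simp
  moreover have "0 \<le> v * b" using assms by simp
  ultimately show ?thesis by simp
qed

lemma convex_Cc: "convex (Cc S :: (real^'n) set)"
proof (rule convexI)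
  fix x y :: "real^'n" and u v :: real
  assume x: "x \<in> Cc S" and y: "y \<in> Cc S" and u: "0 \<le> u" and v: "0 \<le> v" and uv: "u + v = 1"
  have "(\<Sum>i\<in>UNIV. (u *\<^sub>R x + v *\<^sub>R y)$i) = u * (\<Sum>i\<in>UNIV. x$i) + v * (\<Sum>i\<in>UNIV. y$i)"
    by (simp add: sum.distrib sum_distrib_left)
  then have "u *\<^sub>R x + v *\<^sub>R y \<in> sE" using x y by (simp add: Cc_def sE_def)
  moreover have "(i \<in> S \<longrightarrow> (u *\<^sub>R x + v *\<^sub>R y)$i > 0) \<and> (i \<notin> S \<longrightarrow> (u *\<^sub>R x + v *\<^sub>R y)$i < 0)" for i
  proof (intro conjI impI)
    assume "i \<in> S"
    then have "x$i > 0" "y$i > 0" using x y by (auto simp: Cc_def)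
    then show "(u *\<^sub>R x + v *\<^sub>R y)$i > 0" using pos_comb[OF u v uv] by simp
  next
    assume "i \<notin> S"
    then have "- x$i > 0" "- y$i > 0" using x y by (auto simp: Cc_def)
    then have "0 < u * (- x$i) + v * (- y$i)" using pos_comb[OF u v uv] by blast
    then show "(u *\<^sub>R x + v *\<^sub>R y)$i < 0" by simp
  qed
  ultimately show "u *\<^sub>R x + v *\<^sub>R y \<in> Cc S" by (simp add: Cc_def)
qed

lemma comp_eq:
  assumes xU: "x \<in> (UU :: (real^'n) set)"
  shows "connected_component_set UU x = Cc {i. x$i > 0}"
proof (rule equalityI)
  define S where "S = {i. x$i > 0}"
  have xC: "x \<in> Cc S" using xU by (auto simp: Cc_def UU_def S_def neq_iff)
  have CU: "Cc S \<subseteq> UU" by (auto simp: Cc_def UU_def) (metis less_irrefl)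
  show "Cc {i. x$i > 0} \<subseteq> connected_component_set UU x"
    unfolding S_def[symmetric]
    by (rule connected_component_maximal[OF xC convex_connected[OF convex_Cc] CU])
  define K where "K = connected_component_set UU x"
  define O1 :: "(real^'n) set" where "O1 = {y. \<forall>i. (i \<in> S \<longrightarrow> y$i > 0) \<and> (i \<notin> S \<longrightarrow> y$i < 0)}"
  define O2 :: "(real^'n) set" where "O2 = {y. \<exists>i. (i \<in> S \<and> y$i < 0) \<or> (i \<notin> S \<and> y$i > 0)}"
  have pw: "0 < (if i \<in> S then 1 else -1::real) * t \<longleftrightarrow> (i \<in> S \<longrightarrow> t > 0) \<and> (i \<notin> S \<longrightarrow> t < 0)" for i t
    by auto
  have pw2: "(if i \<in> S then 1 else -1::real) * t < 0 \<longleftrightarrow> (i \<in> S \<and> t < 0) \<or> (i \<notin> S \<and> t > 0)" for i t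
    by auto
  have O1eq: "O1 = (\<Inter>i. {y. 0 < (if i \<in> S then 1 else -1::real) * y$i})"
    unfolding O1_def by (simp only: pw INT_iff mem_Collect_eq set_eq_iff ball_UNIV) blast
  have O2eq: "O2 = (\<Union>i. {y. (if i \<in> S then 1 else -1::real) * y$i < 0})"
    unfolding O2_def by (simp only: pw2 UN_iff mem_Collect_eq set_eq_iff bex_UNIV) blast
  have o1: "open O1" unfolding O1eq
    by (intro open_INT ballI open_Collect_less continuous_intros) auto
  have o2: "open O2" unfolding O2eq
    by (intro open_UN ballI open_Collect_less continuous_intros)
  have d: "O1 \<inter> O2 \<inter> K = {}"
  proof -
    have False if "y \<in> O1" "y \<in> O2" for y
    proof -
      from that(2) obtain i where i: "(i \<in> S \<and> y$i < 0) \<or> (i \<notin> S \<and> y$i > 0)" by (auto simp: O2_def)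
      from that(1) have "(i \<in> S \<longrightarrow> y$i > 0) \<and> (i \<notin> S \<longrightarrow> y$i < 0)" by (simp add: O1_def)
      with i show False by auto
    qed
    then show ?thesis by blast
  qed
  have KU: "K \<subseteq> UU" unfolding K_def by (rule connected_component_subset)
  have c: "K \<subseteq> O1 \<union> O2"
  proof
    fix y assume "y \<in> K"
    then have "\<forall>a. y$a \<noteq> 0" using KU by (auto simp: UU_def)
    then show "y \<in> O1 \<union> O2" unfolding O1_def O2_def by (auto simp: neq_iff)
  qed
  have "x \<in> K" using xU by (simp add: K_def)
  moreover have "x \<in> O1" using xC by (auto simp: O1_def Cc_def)
  ultimately have "O1 \<inter> K \<noteq> {}" by blast
  then have "O2 \<inter> K = {}" using connectedD[OF _ o1 o2 d c] by (auto simp: K_def)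
  then have "K \<subseteq> O1" using c by blast
  then show "connected_component_set UU x \<subseteq> Cc {i. x$i > 0}"
    using KU unfolding K_def[symmetric] S_def[symmetric]
    by (auto simp: O1_def Cc_def UU_def)
qed

definition ww :: "'n set \<Rightarrow> real^'n" where
  "ww S = (\<chi> i. if i \<in> S then real (card (- S)) else - real (card S))"

lemma ww_props:
  assumes "S \<in> PS"
  shows "ww S \<in> Cc S"
proof -
  have S: "S \<noteq> {}" "- S \<noteq> {}" using assms by (auto simp: PS_def)
  then have c: "card S > 0" "card (- S) > 0" by (auto simp: card_gt_0_iff)
  have "(\<Sum>i\<in>UNIV. ww S $ i) = (\<Sum>i\<in>S. real (card (- S))) + (\<Sum>i\<in>- S. - real (card S))"
    by (simp add: ww_def sum.If_cases Compl_eq_Diff_UNIV)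
  also have "\<dots> = 0" by simp
  finally have "ww S \<in> sE" by (simp add: sE_def)
  then show ?thesis using c by (auto simp: Cc_def ww_def)
qed

lemma comps:
  assumes "CARD('n::finite) \<ge> 2"
  shows "components (UU :: (real^'n) set) = Cc ` PS"
proof (rule equalityI)
  show "components (UU :: (real^'n) set) \<subseteq> Cc ` PS"
  proof
    fix C :: "(real^'n) set" assume "C \<in> components (UU :: (real^'n) set)"
    then obtain x where x: "x \<in> UU" "C = connected_component_set UU x" by (auto simp: components_def)
    have xE: "x \<in> sE" and nz: "\<forall>a. x$a \<noteq> 0" using x by (auto simp: UU_def)
    have "{i. x$i > 0} \<noteq> {}"
    proof
      assume "{i. x$i > 0} = {}"
      then have "\<forall>i. x$i \<le> 0" by (auto simp: not_less)
      then have "x = 0" by (rule zero_of_nonpos[OF xE])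
      with nz show False by simp
    qed
    moreover have "{i. x$i > 0} \<noteq> UNIV"
    proof
      assume "{i. x$i > 0} = UNIV"
      then have "\<forall>i. x$i \<ge> 0" by (metis UNIV_I mem_Collect_eq less_imp_le)
      then have "x = 0" by (rule zero_of_nonneg[OF xE])
      with nz show False by simp
    qed
    ultimately show "C \<in> Cc ` PS" using comp_eq[OF x(1)] x(2) by (auto simp: PS_def)
  qed
  show "Cc ` PS \<subseteq> components (UU :: (real^'n) set)"
  proof
    fix C :: "(real^'n) set" assume "C \<in> Cc ` PS"
    then obtain S where S: "S \<in> PS" "C = Cc S" by blast
    have w: "ww S \<in> Cc S" by (rule ww_props[OF S(1)])
    then have wU: "ww S \<in> UU" by (auto simp: Cc_def UU_def) (metis less_irrefl)
    have "{i. ww S $ i > 0} = S" using w by (auto simp: Cc_def) (metis less_asym)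
    then have "connected_component_set UU (ww S) = C" using comp_eq[OF wU] S by simp
    then show "C \<in> components (UU :: (real^'n) set)" using wU by (auto simp: components_def)
  qed
qed

lemma closure_Cc:
  assumes "S \<in> PS"
  shows "closure (Cc S) = (Kc S :: (real^'n) set)"
proof (rule equalityI)
  have "Kc S = {x::real^'n. ind UNIV \<bullet> x = 0} \<inter> (\<Inter>i\<in>UNIV. if i \<in> S then {x. x$i \<ge> 0} else {x. x$i \<le> 0})"
    by (auto simp: Kc_def sE_def sgnS_def ind_inner split: if_split_asm)
  moreover have "closed ({x::real^'n. ind UNIV \<bullet> x = 0} \<inter> (\<Inter>i\<in>UNIV. if i \<in> S then {x. x$i \<ge> 0} else {x. x$i \<le> 0}))"
    by (intro closed_Int closed_hyperplane closed_INT)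
       (auto simp: closed_halfspace_component_ge_cart closed_halfspace_component_le_cart)
  ultimately have cl: "closed (Kc S :: (real^'n) set)" by simp
  have "Cc S \<subseteq> (Kc S :: (real^'n) set)" by (auto simp: Cc_def Kc_def sgnS_def less_imp_le)
  then show "closure (Cc S) \<subseteq> (Kc S :: (real^'n) set)" by (rule closure_minimal[OF _ cl])
  show "(Kc S :: (real^'n) set) \<subseteq> closure (Cc S)"
  proof
    fix y :: "real^'n" assume y: "y \<in> Kc S"
    have w: "ww S \<in> Cc S" by (rule ww_props[OF assms])
    show "y \<in> closure (Cc S)" unfolding closure_approachable
    proof (intro allI impI)
      fix e :: real assume e: "e > 0"
      define d where "d = e / (2 * (norm (ww S) + 1))"
      have "norm (ww S) + 1 > 0" using norm_ge_zero[of "ww S"] by linarith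
      then have "2 * (norm (ww S) + 1) > 0" by simp
      then have dp: "d > 0" using e by (simp add: d_def)
      define z where "z = y + d *\<^sub>R ww S"
      have "z \<in> Cc S"
      proof -
        have "(\<Sum>i\<in>UNIV. z$i) = (\<Sum>i\<in>UNIV. y$i) + d * (\<Sum>i\<in>UNIV. ww S $ i)"
          by (simp add: z_def sum.distrib sum_distrib_left)
        then have "z \<in> sE" using y w by (simp add: sE_def Kc_def Cc_def)
        moreover have "(i \<in> S \<longrightarrow> z$i > 0) \<and> (i \<notin> S \<longrightarrow> z$i < 0)" for i
        proof -
          have "(i \<in> S \<longrightarrow> y$i \<ge> 0) \<and> (i \<notin> S \<longrightarrow> y$i \<le> 0)" using y by (simp add: Kc_def sgnS_def)
          moreover have "(i \<in> S \<longrightarrow> ww S$i > 0) \<and> (i \<notin> S \<longrightarrow> ww S$i < 0)" using w by (simp add: Cc_def)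
          ultimately show ?thesis using dp
            by (auto simp: z_def intro: add_nonneg_pos add_nonpos_neg mult_pos_pos mult_pos_neg)
        qed
        ultimately show ?thesis by (simp add: Cc_def)
      qed
      moreover have "dist z y < e"
      proof -
        have "dist z y = d * norm (ww S)" using dp by (simp add: z_def dist_norm)
        also have "\<dots> < e"
        proof -
          have q: "norm (ww S) / (2 * (norm (ww S) + 1)) < 1"
          proof -
            have n0: "norm (ww S :: real^'n) \<ge> 0" by (rule norm_ge_zero)
            have n2: "2 * (norm (ww S :: real^'n) + 1) > 0" using n0 by (intro mult_pos_pos add_nonneg_pos) auto
            have e2: "2 * (norm (ww S :: real^'n) + 1) = norm (ww S :: real^'n) + (norm (ww S :: real^'n) + 2)"
              by (simp add: algebra_simps)
            have "0 < norm (ww S :: real^'n) + 2" using n0 by (intro add_nonneg_pos) auto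
            then have "norm (ww S :: real^'n) < 2 * (norm (ww S :: real^'n) + 1)" unfolding e2 by simp
            with n2 show ?thesis by (simp add: divide_less_eq)
          qed
          have "d * norm (ww S) = e * (norm (ww S) / (2 * (norm (ww S) + 1)))" by (simp add: d_def)
          also have "\<dots> < e * 1" using e q by (intro mult_strict_left_mono)
          finally show ?thesis by simp
        qed
        finally show ?thesis .
      qed
      ultimately show "\<exists>z\<in>Cc S. dist z y < e" by blast
    qed
  qed
qed

theorem theorem4p1:
  assumes "CARD('n::finite) \<ge> 2"
  shows "closure ` arrangement_regions (root_system_A :: (real^'n) set)
           = cone_on ` {F. F facet_of root_polytope (root_system_A :: (real^'n) set)}"
proof -
  have U: "span (root_system_A :: (real^'n) set) - \<Union>(root_arrangement (root_system_A :: (real^'n) set)) = UU"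
    using span_root[OF assms] arr_union[OF assms] by (auto simp: UU_def)
  have "closure ` arrangement_regions (root_system_A :: (real^'n) set) = closure ` Cc ` PS"
    unfolding arrangement_regions_def U comps[OF assms] ..
  also have "\<dots> = Kc ` PS" by (simp add: image_image closure_Cc cong: image_cong)
  also have "\<dots> = cone_on ` Fc ` PS" by (simp add: image_image cone_Fc[OF assms] cong: image_cong)
  also have "Fc ` PS = {F. F facet_of root_polytope (root_system_A :: (real^'n) set)}"
    using facet_char[OF assms] by blast
  finally show ?thesis .
qed


end
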